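(* Let $d\ge1$, let $T>0$ be a finite random variable with $D\in\{1,\dots,d\}$, and let $\tilde T$ be a finite random variable with $0<\tilde T\le T$ and $\tilde D=D\,\mathbf 1\{\tilde T=T\}$. If the representativity property holds, i.e. $$P(T\le t,D=j\mid\tilde T>s)=P(T\le t,D=j\mid T>s)\quad\text{for all } t\ge0,\ s\in\mathcal J,\ j=1,\dots,d,$$ then the identifiability property holds, i.e. $\tilde H_j(t)=H_j(t)$ for all $t\in\mathcal J$ and $j=1,\dots,d$. The reverse implication does not hold: there exist such $(T,D,\tilde T,\tilde D)$ for which the identifiability property holds but the representativity property fails.
   Context: Functions of the event time: - $S(t)=P(T>t)$. - $F_j(t)=P(T\le t,D=j)$. - $H_j(t)=\int_{(0,t]}S(s-)^{-1}F_j(ds)$. Observed quantities: - $\tilde S(t)=P(\tilde T>t)$. - $\tilde F_j(t)=P(\tilde T\le t,\tilde D=j)$. - $\tilde H_j(t)=\int_{(0,t]}\tilde S(s-)^{-1}\tilde F_j(ds)$. - Division by $0$ occurs only on null sets of the integrator. - $\mathcal J=\{t\ge0:\tilde S(t)>0\}$. *)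

theory Defs
  imports "HOL-Probability.Probability"
begin

definition survival :: "'a measure \<Rightarrow> ('a \<Rightarrow> real) \<Rightarrow> real \<Rightarrow> real" where
  "survival M X t = measure M {\<omega> \<in> space M. X \<omega> > t}"

definition cif :: "'a measure \<Rightarrow> ('a \<Rightarrow> real) \<Rightarrow> ('a \<Rightarrow> nat) \<Rightarrow> nat \<Rightarrow> real \<Rightarrow> real" where
  "cif M X E j t = measure M {\<omega> \<in> space M. X \<omega> \<le> t \<and> E \<omega> = j}"

definition cumhaz :: "'a measure \<Rightarrow> ('a \<Rightarrow> real) \<Rightarrow> ('a \<Rightarrow> nat) \<Rightarrow> nat \<Rightarrow> real \<Rightarrow> real" where
  "cumhaz M X E j t =
     set_lebesgue_integral (interval_measure (cif M X E j)) {0<..t}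
       (\<lambda>s. 1 / Lim (at_left s) (survival M X))"

definition setting :: "nat \<Rightarrow> 'a measure \<Rightarrow> ('a \<Rightarrow> real) \<Rightarrow> ('a \<Rightarrow> nat)
    \<Rightarrow> ('a \<Rightarrow> real) \<Rightarrow> ('a \<Rightarrow> nat) \<Rightarrow> bool" where
  "setting d M T D Tt Dt \<longleftrightarrow>
     prob_space M \<and>
     T \<in> borel_measurable M \<and> Tt \<in> borel_measurable M \<and>
     D \<in> measurable M (count_space UNIV) \<and> Dt \<in> measurable M (count_space UNIV) \<and>
     (\<forall>\<omega>\<in>space M. 0 < T \<omega> \<and> D \<omega> \<in> {1..d} \<and> 0 < Tt \<omega> \<and> Tt \<omega> \<le> T \<omega> \<and>
        Dt \<omega> = D \<omega> * (if Tt \<omega> = T \<omega> then 1 else 0))"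

definition Jset :: "'a measure \<Rightarrow> ('a \<Rightarrow> real) \<Rightarrow> real set" where
  "Jset M Tt = {t. t \<ge> 0 \<and> survival M Tt t > 0}"

definition condprob :: "'a measure \<Rightarrow> 'a set \<Rightarrow> 'a set \<Rightarrow> real" where
  "condprob M A B = measure M (A \<inter> B) / measure M B"

definition representative :: "nat \<Rightarrow> 'a measure \<Rightarrow> ('a \<Rightarrow> real) \<Rightarrow> ('a \<Rightarrow> nat)
    \<Rightarrow> ('a \<Rightarrow> real) \<Rightarrow> bool" where
  "representative d M T D Tt \<longleftrightarrow>
     (\<forall>t s j. t \<ge> 0 \<and> s \<in> Jset M Tt \<and> j \<in> {1..d} \<longrightarrow>
        condprob M {\<omega>\<in>space M. T \<omega> \<le> t \<and> D \<omega> = j} {\<omega>\<in>space M. Tt \<omega> > s}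
        = condprob M {\<omega>\<in>space M. T \<omega> \<le> t \<and> D \<omega> = j} {\<omega>\<in>space M. T \<omega> > s})"

definition identifiable :: "nat \<Rightarrow> 'a measure \<Rightarrow> ('a \<Rightarrow> real) \<Rightarrow> ('a \<Rightarrow> nat)
    \<Rightarrow> ('a \<Rightarrow> real) \<Rightarrow> ('a \<Rightarrow> nat) \<Rightarrow> bool" where
  "identifiable d M T D Tt Dt \<longleftrightarrow>
     (\<forall>t j. t \<in> Jset M Tt \<and> j \<in> {1..d} \<longrightarrow> cumhaz M Tt Dt j t = cumhaz M T D j t)"

end

theory Submission
  imports Defs
begin

definition wdist :: "'a measure \<Rightarrow> ('a \<Rightarrow> real) \<Rightarrow> ('a \<Rightarrow> real) \<Rightarrow> real measure" where
  "wdist M g X = distr (density M (\<lambda>\<omega>. ennreal (g \<omega>))) borel X"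

definition rgrid :: "nat \<Rightarrow> real \<Rightarrow> real" where
  "rgrid n s = (of_int \<lceil>s * real (Suc n)\<rceil> - 1) / real (Suc n)"

lemma rgrid_borel[measurable]: "rgrid n \<in> borel_measurable borel"
  unfolding rgrid_def by measurable

lemma rgrid_lt: "rgrid n s < s"
proof -
  have N: "0 < real (Suc n)" by simp
  have "of_int \<lceil>s * real (Suc n)\<rceil> - 1 < s * real (Suc n)" by linarith
  then have "(of_int \<lceil>s * real (Suc n)\<rceil> - 1) / real (Suc n) < s * real (Suc n) / real (Suc n)"
    using N by (rule divide_strict_right_mono)
  then show ?thesis unfolding rgrid_def using N by simp
qed

lemma rgrid_ge: "s - 1 / real (Suc n) \<le> rgrid n s"
proof -
  have N: "0 < real (Suc n)" by simp
  have "s * real (Suc n) - 1 \<le> of_int \<lceil>s * real (Suc n)\<rceil> - 1" by linarith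
  then have "(s * real (Suc n) - 1) / real (Suc n) \<le> (of_int \<lceil>s * real (Suc n)\<rceil> - 1) / real (Suc n)"
    using N by (intro divide_right_mono) auto
  moreover have "(s * real (Suc n) - 1) / real (Suc n) = s - 1 / real (Suc n)"
    using N by (simp add: field_simps)
  ultimately show ?thesis unfolding rgrid_def by simp
qed

lemma rgrid_nonneg: "0 < s \<Longrightarrow> 0 \<le> rgrid n s"
proof -
  assume "0 < s"
  then have "0 < s * real (Suc n)" by simp
  then have "1 \<le> \<lceil>s * real (Suc n)\<rceil>" by linarith
  then show ?thesis unfolding rgrid_def by simp
qed

lemma rgrid_tendsto: "(\<lambda>n. rgrid n s) \<longlonglongrightarrow> s"
proof (rule tendsto_sandwich[of "\<lambda>n. s - 1 / real (Suc n)" _ _ "\<lambda>n. s"])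
  show "\<forall>\<^sub>F n in sequentially. s - 1 / real (Suc n) \<le> rgrid n s" by (intro always_eventually allI rgrid_ge)
  show "\<forall>\<^sub>F n in sequentially. rgrid n s \<le> s" by (simp add: rgrid_lt less_imp_le)
  have "(\<lambda>n. 1 / real (Suc n)) \<longlonglongrightarrow> 0" by (rule LIMSEQ_Suc[OF lim_const_over_n])
  then show "(\<lambda>n. s - 1 / real (Suc n)) \<longlonglongrightarrow> s" using tendsto_diff[OF tendsto_const[of s]] by fastforce
qed simp

lemma rgrid_at_left: "filterlim (\<lambda>n. rgrid n s) (at_left s) sequentially"
  unfolding filterlim_at
proof
  show "\<forall>\<^sub>F n in sequentially. rgrid n s \<in> {..<s} \<and> rgrid n s \<noteq> s"
    by (intro always_eventually allI) (simp add: rgrid_lt less_imp_neq)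
qed (rule rgrid_tendsto)

lemma rgrid_finite: "finite (rgrid n ` {0<..t})"
proof (rule finite_subset)
  show "rgrid n ` {0<..t} \<subseteq> (\<lambda>k. (of_int k - 1) / real (Suc n)) ` {1..\<lceil>t * real (Suc n)\<rceil>}"
  proof
    fix v assume "v \<in> rgrid n ` {0<..t}"
    then obtain s where s: "0 < s" "s \<le> t" "v = rgrid n s" by auto
    have "0 < s * real (Suc n)" using s(1) by simp
    then have "1 \<le> \<lceil>s * real (Suc n)\<rceil>" by linarith
    moreover have "\<lceil>s * real (Suc n)\<rceil> \<le> \<lceil>t * real (Suc n)\<rceil>"
      using s(2) by (intro ceiling_mono mult_right_mono) auto
    ultimately show "v \<in> (\<lambda>k. (of_int k - 1) / real (Suc n)) ` {1..\<lceil>t * real (Suc n)\<rceil>}"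
      using s(3) unfolding rgrid_def by auto
  qed
qed simp

context prob_space
begin

lemma wdist_sets[simp]: "sets (wdist M g X) = sets borel"
  by (simp add: wdist_def)

lemma wdist_integral:
  assumes [measurable]: "g \<in> borel_measurable M" "X \<in> borel_measurable M" "f \<in> borel_measurable borel"
    and nn: "\<And>\<omega>. \<omega> \<in> space M \<Longrightarrow> 0 \<le> g \<omega>"
  shows "integral\<^sup>L (wdist M g X) f = (\<integral>\<omega>. g \<omega> * f (X \<omega>) \<partial>M)"
proof -
  have "integral\<^sup>L (distr (density M (\<lambda>\<omega>. ennreal (g \<omega>))) borel X) f
      = integral\<^sup>L (density M (\<lambda>\<omega>. ennreal (g \<omega>))) (\<lambda>\<omega>. f (X \<omega>))"
    by (rule integral_distr) auto
  also have "\<dots> = (\<integral>\<omega>. g \<omega> *\<^sub>R f (X \<omega>) \<partial>M)"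
    by (rule integral_density) (auto simp: nn)
  finally show ?thesis by (simp add: wdist_def)
qed

lemma wdist_finite:
  assumes [measurable]: "g \<in> borel_measurable M" "X \<in> borel_measurable M"
    and nn: "\<And>\<omega>. \<omega> \<in> space M \<Longrightarrow> 0 \<le> g \<omega> \<and> g \<omega> \<le> B"
  shows "finite_borel_measure (wdist M g X)"
proof -
  have "emeasure (density M (\<lambda>\<omega>. ennreal (g \<omega>))) (space M) = (\<integral>\<^sup>+\<omega>. ennreal (g \<omega>) \<partial>M)"
    by (subst emeasure_density) (auto intro!: nn_integral_cong)
  also have "\<dots> \<le> (\<integral>\<^sup>+\<omega>. ennreal B \<partial>M)"
    using nn by (intro nn_integral_mono) (auto intro!: ennreal_leI)
  also have "\<dots> < \<infinity>" by (simp add: emeasure_space_1)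
  finally have fin: "emeasure (wdist M g X) (space (wdist M g X)) < \<infinity>"
    unfolding wdist_def by (simp add: emeasure_distr)
  interpret finite_measure "wdist M g X" by (rule finite_measureI) (use fin in auto)
  show ?thesis by unfold_locales simp
qed

lemma wdist_cdf:
  assumes [measurable]: "g \<in> borel_measurable M" "X \<in> borel_measurable M"
    and nn: "\<And>\<omega>. \<omega> \<in> space M \<Longrightarrow> 0 \<le> g \<omega> \<and> g \<omega> \<le> B"
  shows "cdf (wdist M g X) x = (\<integral>\<omega>. g \<omega> * indicator {..x} (X \<omega>) \<partial>M)"
proof -
  interpret F: finite_borel_measure "wdist M g X" by (rule wdist_finite[OF assms])
  have "cdf (wdist M g X) x = integral\<^sup>L (wdist M g X) (indicator {..x})"
    by (simp add: cdf_def F.borel_UNIV)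
  also have "\<dots> = (\<integral>\<omega>. g \<omega> * indicator {..x} (X \<omega>) \<partial>M)"
    by (rule wdist_integral) (use nn in auto)
  finally show ?thesis .
qed

lemma surv_cdf:
  assumes [measurable]: "X \<in> borel_measurable M"
  shows "survival M X u = 1 - cdf (distr M borel X) u"
proof -
  have "cdf (distr M borel X) u = prob {\<omega>\<in>space M. X \<omega> \<le> u}"
    by (simp add: cdf_def measure_distr vimage_def Int_def conj_commute)
  moreover have "{\<omega>\<in>space M. X \<omega> > u} = space M - {\<omega>\<in>space M. X \<omega> \<le> u}" by auto
  ultimately show ?thesis
    unfolding survival_def by (simp add: prob_compl)
qed

lemma surv_left:
  assumes [measurable]: "X \<in> borel_measurable M"
  shows "(survival M X \<longlongrightarrow> prob {\<omega>\<in>space M. s \<le> X \<omega>}) (at_left s)"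
proof -
  interpret N: real_distribution "distr M borel X" by simp
  have "((\<lambda>u. 1 - cdf (distr M borel X) u) \<longlongrightarrow> 1 - measure (distr M borel X) {..<s}) (at_left s)"
    by (intro tendsto_intros N.cdf_at_left)
  moreover have "measure (distr M borel X) {..<s} = prob {\<omega>\<in>space M. X \<omega> < s}"
    by (simp add: measure_distr vimage_def Int_def conj_commute)
  moreover have "{\<omega>\<in>space M. s \<le> X \<omega>} = space M - {\<omega>\<in>space M. X \<omega> < s}" by auto
  moreover have "survival M X = (\<lambda>u. 1 - cdf (distr M borel X) u)"
    by (rule ext) (rule surv_cdf[OF assms])
  ultimately show ?thesis
    by (simp add: prob_compl)
qed

lemma surv_Lim:
  assumes [measurable]: "X \<in> borel_measurable M"
  shows "Lim (at_left s) (survival M X) = prob {\<omega>\<in>space M. s \<le> X \<omega>}"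
  by (rule tendsto_Lim[OF _ surv_left[OF assms]]) simp

lemma cif_cdf:
  assumes [measurable]: "X \<in> borel_measurable M" "E \<in> measurable M (count_space UNIV)"
  shows "cif M X E j = cdf (wdist M (indicator {\<omega>\<in>space M. E \<omega> = j}) X)"
proof
  fix x
  have "cdf (wdist M (indicator {\<omega>\<in>space M. E \<omega> = j}) X) x
     = (\<integral>\<omega>. indicator {\<omega>\<in>space M. E \<omega> = j} \<omega> * indicator {..x} (X \<omega>) \<partial>M)"
    by (rule wdist_cdf[where B=1]) auto
  also have "\<dots> = (\<integral>\<omega>. indicator {\<omega>\<in>space M. X \<omega> \<le> x \<and> E \<omega> = j} \<omega> \<partial>M)"
    by (rule Bochner_Integration.integral_cong) (auto simp: indicator_def)
  also have "\<dots> = cif M X E j x"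
    by (simp add: cif_def Int_absorb2)
  finally show "cif M X E j x = cdf (wdist M (indicator {\<omega>\<in>space M. E \<omega> = j}) X) x" ..
qed

lemma interval_measure_cif:
  assumes [measurable]: "X \<in> borel_measurable M" "E \<in> measurable M (count_space UNIV)"
  shows "interval_measure (cif M X E j) = wdist M (indicator {\<omega>\<in>space M. E \<omega> = j}) X"
proof -
  let ?N = "wdist M (indicator {\<omega>\<in>space M. E \<omega> = j}) X"
  interpret N: finite_borel_measure ?N
    by (rule wdist_finite[where B=1]) auto
  have F: "cif M X E j = cdf ?N" by (rule cif_cdf) fact+
  have 1: "finite_borel_measure (interval_measure (cdf ?N))"
    by (rule finite_borel_measure_interval_measure[where m="measure ?N (space ?N)"])
       (auto intro: N.cdf_nondecreasing N.cdf_is_right_cont N.cdf_lim_at_bot N.cdf_lim_at_top)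
  have 2: "cdf (interval_measure (cdf ?N)) = cdf ?N"
    by (rule cdf_interval_measure)
       (auto intro: N.cdf_nondecreasing N.cdf_is_right_cont N.cdf_lim_at_bot)
  show ?thesis unfolding F
    by (rule cdf_unique'[OF 1 N.finite_borel_measure_axioms 2])
qed

lemma q_borel:
  fixes X :: "'a \<Rightarrow> real"
  assumes [measurable]: "X \<in> borel_measurable M"
  shows "(\<lambda>s. prob {\<omega>\<in>space M. s \<le> X \<omega>}) \<in> borel_measurable borel"
proof -
  have "mono (\<lambda>s. - prob {\<omega>\<in>space M. s \<le> X \<omega>})"
    by (auto simp: mono_def intro!: finite_measure_mono)
  then have "(\<lambda>s. - prob {\<omega>\<in>space M. s \<le> X \<omega>}) \<in> borel_measurable borel"
    by (rule borel_measurable_mono)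
  then have "(\<lambda>s. - (- prob {\<omega>\<in>space M. s \<le> X \<omega>})) \<in> borel_measurable borel"
    by measurable
  then show ?thesis by simp
qed

lemma surv_borel:
  fixes X :: "'a \<Rightarrow> real"
  assumes [measurable]: "X \<in> borel_measurable M"
  shows "survival M X \<in> borel_measurable borel"
proof -
  have "mono (\<lambda>s. - survival M X s)"
    unfolding survival_def by (auto simp: mono_def intro!: finite_measure_mono)
  then have "(\<lambda>s. - survival M X s) \<in> borel_measurable borel"
    by (rule borel_measurable_mono)
  then have "(\<lambda>s. - (- survival M X s)) \<in> borel_measurable borel"
    by measurable
  then show ?thesis by simp
qed

lemma cumhaz_expect:
  assumes [measurable]: "X \<in> borel_measurable M" "E \<in> measurable M (count_space UNIV)"
  shows "cumhaz M X E j t = (\<integral>\<omega>. indicator {\<omega>\<in>space M. E \<omega> = j} \<omega> *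
     (indicator {0<..t} (X \<omega>) * (1 / prob {\<omega>'\<in>space M. X \<omega> \<le> X \<omega>'})) \<partial>M)"
proof -
  note qb[measurable] = q_borel[OF assms(1)]
  have "cumhaz M X E j t = set_lebesgue_integral (wdist M (indicator {\<omega>\<in>space M. E \<omega> = j}) X) {0<..t}
       (\<lambda>s. 1 / prob {\<omega>\<in>space M. s \<le> X \<omega>})"
    unfolding cumhaz_def interval_measure_cif[OF assms] surv_Lim[OF assms(1)] ..
  also have "\<dots> = (\<integral>\<omega>. indicator {\<omega>\<in>space M. E \<omega> = j} \<omega> *
     (indicator {0<..t} (X \<omega>) * (1 / prob {\<omega>'\<in>space M. X \<omega> \<le> X \<omega>'})) \<partial>M)"
    unfolding set_lebesgue_integral_def
    by (subst wdist_integral) auto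
  finally show ?thesis .
qed

lemma int_ind_meas:
  fixes X :: "'a \<Rightarrow> real"
  shows "(\<integral>\<omega>. indicator {\<omega>\<in>space M. P \<omega>} \<omega> * indicator {..x} (X \<omega>) \<partial>M)
   = prob {\<omega>\<in>space M. X \<omega> \<le> x \<and> P \<omega>}"
proof -
  have "(\<integral>\<omega>. indicator {\<omega>\<in>space M. P \<omega>} \<omega> * indicator {..x} (X \<omega>) \<partial>M)
     = ((\<integral>\<omega>. indicator {\<omega>\<in>space M. X \<omega> \<le> x \<and> P \<omega>} \<omega> \<partial>M) :: real)"
    by (rule Bochner_Integration.integral_cong) (auto simp: indicator_def)
  also have "\<dots> = prob {\<omega>\<in>space M. X \<omega> \<le> x \<and> P \<omega>}"
    by (simp add: Int_absorb2)
  finally show ?thesis .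
qed

lemma rep_integral:
  fixes T Tt :: "'a \<Rightarrow> real" and D :: "'a \<Rightarrow> nat"
  assumes [measurable]: "T \<in> borel_measurable M" "Tt \<in> borel_measurable M"
    "D \<in> measurable M (count_space UNIV)" "\<phi> \<in> borel_measurable borel"
  assumes pos: "\<And>\<omega>. \<omega> \<in> space M \<Longrightarrow> 0 < T \<omega> \<and> Tt \<omega> \<le> T \<omega>"
    and rep: "representative d M T D Tt" and j: "j \<in> {1..d}" and sJ: "s \<in> Jset M Tt"
  shows "(\<integral>\<omega>. indicator {\<omega>\<in>space M. D \<omega> = j \<and> s < Tt \<omega>} \<omega> * \<phi> (T \<omega>) \<partial>M)
    = (survival M Tt s / survival M T s) *
      (\<integral>\<omega>. indicator {\<omega>\<in>space M. D \<omega> = j \<and> s < T \<omega>} \<omega> * \<phi> (T \<omega>) \<partial>M)"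
proof -
  define c where "c = survival M Tt s / survival M T s"
  define g1 :: "'a \<Rightarrow> real" where "g1 = indicator {\<omega>\<in>space M. D \<omega> = j \<and> s < Tt \<omega>}"
  define g2 where "g2 = (\<lambda>\<omega>. c * indicator {\<omega>\<in>space M. D \<omega> = j \<and> s < T \<omega>} \<omega>)"
  have St_pos: "survival M Tt s > 0" using sJ by (simp add: Jset_def)
  have St_le: "survival M Tt s \<le> survival M T s"
    unfolding survival_def using pos by (intro finite_measure_mono) (auto intro: less_le_trans)
  have c01: "0 \<le> c" "c \<le> 1" using St_pos St_le by (auto simp: c_def)
  have [measurable]: "g1 \<in> borel_measurable M" "g2 \<in> borel_measurable M"
    unfolding g1_def g2_def by measurable
  have b1: "\<And>\<omega>. \<omega> \<in> space M \<Longrightarrow> 0 \<le> g1 \<omega> \<and> g1 \<omega> \<le> 1"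
    by (auto simp: g1_def indicator_def)
  have b2: "\<And>\<omega>. \<omega> \<in> space M \<Longrightarrow> 0 \<le> g2 \<omega> \<and> g2 \<omega> \<le> 1"
    using c01 by (auto simp: g2_def indicator_def)
  have cdf_eq: "cdf (wdist M g1 T) = cdf (wdist M g2 T)"
  proof
    fix x
    have "cdf (wdist M g1 T) x = (\<integral>\<omega>. g1 \<omega> * indicator {..x} (T \<omega>) \<partial>M)"
      by (rule wdist_cdf[OF _ _ b1]) auto
    also have "\<dots> = prob {\<omega>\<in>space M. T \<omega> \<le> x \<and> (D \<omega> = j \<and> s < Tt \<omega>)}"
      unfolding g1_def by (rule int_ind_meas)
    finally have e1: "cdf (wdist M g1 T) x = prob {\<omega>\<in>space M. T \<omega> \<le> x \<and> (D \<omega> = j \<and> s < Tt \<omega>)}" .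
    have "cdf (wdist M g2 T) x = (\<integral>\<omega>. c * (indicator {\<omega>\<in>space M. D \<omega> = j \<and> s < T \<omega>} \<omega> * indicator {..x} (T \<omega>)) \<partial>M)"
      by (subst wdist_cdf[OF _ _ b2]) (auto simp: g2_def mult.assoc)
    also have "\<dots> = c * prob {\<omega>\<in>space M. T \<omega> \<le> x \<and> (D \<omega> = j \<and> s < T \<omega>)}"
      by (simp only: integral_mult_right_zero int_ind_meas)
    finally have e2: "cdf (wdist M g2 T) x = c * prob {\<omega>\<in>space M. T \<omega> \<le> x \<and> (D \<omega> = j \<and> s < T \<omega>)}" .
    show "cdf (wdist M g1 T) x = cdf (wdist M g2 T) x"
    proof (cases "x \<ge> 0")
      case True
      let ?A = "{\<omega>\<in>space M. T \<omega> \<le> x \<and> D \<omega> = j}"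
      have "condprob M ?A {\<omega>\<in>space M. Tt \<omega> > s} = condprob M ?A {\<omega>\<in>space M. T \<omega> > s}"
        using rep True j sJ unfolding representative_def by blast
      moreover have "?A \<inter> {\<omega>\<in>space M. Tt \<omega> > s} = {\<omega>\<in>space M. T \<omega> \<le> x \<and> (D \<omega> = j \<and> s < Tt \<omega>)}" by auto
      moreover have "?A \<inter> {\<omega>\<in>space M. T \<omega> > s} = {\<omega>\<in>space M. T \<omega> \<le> x \<and> (D \<omega> = j \<and> s < T \<omega>)}" by auto
      ultimately have "prob {\<omega>\<in>space M. T \<omega> \<le> x \<and> (D \<omega> = j \<and> s < Tt \<omega>)} / survival M Tt s
          = prob {\<omega>\<in>space M. T \<omega> \<le> x \<and> (D \<omega> = j \<and> s < T \<omega>)} / survival M T s"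
        by (simp add: condprob_def survival_def)
      then show ?thesis unfolding e1 e2 c_def using St_pos St_le
        by (simp add: field_simps)
    next
      case False
      have E: "{\<omega>\<in>space M. T \<omega> \<le> x \<and> (D \<omega> = j \<and> s < Tt \<omega>)} = {}"
           "{\<omega>\<in>space M. T \<omega> \<le> x \<and> (D \<omega> = j \<and> s < T \<omega>)} = {}"
        using pos False by (auto simp: not_le; smt (verit, ccfv_threshold))+
      show ?thesis unfolding e1 e2 E by simp
    qed
  qed
  have N: "wdist M g1 T = wdist M g2 T"
    by (rule cdf_unique'[OF wdist_finite[OF _ _ b1] wdist_finite[OF _ _ b2] cdf_eq]) auto
  have "(\<integral>\<omega>. g1 \<omega> * \<phi> (T \<omega>) \<partial>M) = (\<integral>\<omega>. g2 \<omega> * \<phi> (T \<omega>) \<partial>M)"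
    using wdist_integral[of g1 T \<phi>] wdist_integral[of g2 T \<phi>] b1 b2 N by simp
  also have "\<dots> = c * (\<integral>\<omega>. indicator {\<omega>\<in>space M. D \<omega> = j \<and> s < T \<omega>} \<omega> * \<phi> (T \<omega>) \<partial>M)"
    by (simp add: g2_def mult.assoc)
  finally show ?thesis by (simp add: g1_def c_def)
qed

lemma key:
  fixes T Tt :: "'a \<Rightarrow> real" and D :: "'a \<Rightarrow> nat"
  assumes [measurable]: "T \<in> borel_measurable M" "Tt \<in> borel_measurable M"
    "D \<in> measurable M (count_space UNIV)"
  assumes pos: "\<And>\<omega>. \<omega> \<in> space M \<Longrightarrow> 0 < T \<omega> \<and> Tt \<omega> \<le> T \<omega>"
    and rep: "representative d M T D Tt" and j: "j \<in> {1..d}" and tJ: "t \<in> Jset M Tt"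
  shows "(\<integral>\<omega>. indicator {\<omega>\<in>space M. D \<omega> = j \<and> Tt \<omega> = T \<omega>} \<omega> *
            (indicator {0<..t} (T \<omega>) * (1 / prob {\<omega>'\<in>space M. T \<omega> \<le> Tt \<omega>'})) \<partial>M)
       = (\<integral>\<omega>. indicator {\<omega>\<in>space M. D \<omega> = j} \<omega> *
            (indicator {0<..t} (T \<omega>) * (1 / prob {\<omega>'\<in>space M. T \<omega> \<le> T \<omega>'})) \<partial>M)"
proof -
  define qt where "qt = (\<lambda>s. prob {\<omega>\<in>space M. s \<le> Tt \<omega>})"
  define q where "q = (\<lambda>s. prob {\<omega>\<in>space M. s \<le> T \<omega>})"
  define f where "f = (\<lambda>s. indicator {0<..t} s * (1 / qt s) :: real)"
  define h where "h = (\<lambda>s. indicator {0<..t} s * (1 / q s) :: real)"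
  define c where "c = (\<lambda>u. survival M Tt u / survival M T u)"
  have [measurable]: "qt \<in> borel_measurable borel" "q \<in> borel_measurable borel"
    unfolding qt_def q_def by (auto intro: q_borel)
  have [measurable]: "f \<in> borel_measurable borel" "h \<in> borel_measurable borel"
    unfolding f_def h_def by measurable
  have [measurable]: "survival M Tt \<in> borel_measurable borel" "survival M T \<in> borel_measurable borel"
    by (auto intro: surv_borel)
  have [measurable]: "c \<in> borel_measurable borel"
    unfolding c_def by measurable
  define B where "B = 1 / survival M Tt t"
  have Stt: "survival M Tt t > 0" using tJ by (simp add: Jset_def)
  have B0: "0 \<le> B" using Stt by (simp add: B_def)
  have qt_ge: "survival M Tt t \<le> qt s" if "s \<le> t" for s
    unfolding qt_def survival_def using that by (intro finite_measure_mono) auto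
  have q_ge: "qt s \<le> q s" for s
    unfolding qt_def q_def using pos by (intro finite_measure_mono) (auto intro: order_trans)
  have St_le: "survival M Tt u \<le> survival M T u" for u
    unfolding survival_def using pos by (intro finite_measure_mono) (auto intro: less_le_trans)
  have St_mono: "survival M Tt t \<le> survival M Tt u" if "u \<le> t" for u
    unfolding survival_def using that by (intro finite_measure_mono) auto
  have c01: "0 \<le> c u \<and> c u \<le> 1" for u
    using St_le[of u] measure_nonneg[of M "{\<omega>\<in>space M. u < T \<omega>}"]
      measure_nonneg[of M "{\<omega>\<in>space M. u < Tt \<omega>}"]
    by (auto simp: c_def survival_def divide_le_eq_1 less_le)
  have f_bound: "\<bar>f s\<bar> \<le> B" for s
  proof (cases "s \<in> {0<..t}")
    case True
    then have "survival M Tt t \<le> qt s" by (intro qt_ge) auto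
    then show ?thesis using True Stt by (simp add: f_def B_def frac_le)
  next
    case False then show ?thesis using Stt by (simp add: f_def B_def)
  qed
  have f_zero: "f s = 0" if "s \<notin> {0<..t}" for s using that by (simp add: f_def)
  define a where "a = (\<lambda>n. \<integral>\<omega>. indicator {\<omega>\<in>space M. D \<omega> = j \<and> rgrid n (T \<omega>) < Tt \<omega>} \<omega> * f (T \<omega>) \<partial>M)"
  define b where "b = (\<lambda>n. \<integral>\<omega>. indicator {\<omega>\<in>space M. D \<omega> = j} \<omega> * (c (rgrid n (T \<omega>)) * f (T \<omega>)) \<partial>M)"
  have lim_a: "a \<longlonglongrightarrow> (\<integral>\<omega>. indicator {\<omega>\<in>space M. D \<omega> = j \<and> Tt \<omega> = T \<omega>} \<omega> * f (T \<omega>) \<partial>M)"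
    unfolding a_def
  proof (rule integral_dominated_convergence[where w="\<lambda>_. B"])
    show "AE \<omega> in M. (\<lambda>n. indicator {\<omega>\<in>space M. D \<omega> = j \<and> rgrid n (T \<omega>) < Tt \<omega>} \<omega> * f (T \<omega>))
       \<longlonglongrightarrow> indicator {\<omega>\<in>space M. D \<omega> = j \<and> Tt \<omega> = T \<omega>} \<omega> * f (T \<omega>)"
    proof (rule AE_I2)
      fix \<omega> assume \<omega>: "\<omega> \<in> space M"
      show "(\<lambda>n. indicator {\<omega>\<in>space M. D \<omega> = j \<and> rgrid n (T \<omega>) < Tt \<omega>} \<omega> * f (T \<omega>))
       \<longlonglongrightarrow> indicator {\<omega>\<in>space M. D \<omega> = j \<and> Tt \<omega> = T \<omega>} \<omega> * f (T \<omega>)"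
      proof (cases "Tt \<omega> = T \<omega>")
        case True
        then show ?thesis using \<omega> by (simp add: rgrid_lt indicator_def)
      next
        case False
        then have "Tt \<omega> < T \<omega>" using pos[OF \<omega>] by simp
        then have "\<forall>\<^sub>F n in sequentially. Tt \<omega> < rgrid n (T \<omega>)"
          by (rule order_tendstoD(1)[OF rgrid_tendsto])
        then have "\<forall>\<^sub>F n in sequentially. indicator {\<omega>\<in>space M. D \<omega> = j \<and> rgrid n (T \<omega>) < Tt \<omega>} \<omega> * f (T \<omega>)
             = indicator {\<omega>\<in>space M. D \<omega> = j \<and> Tt \<omega> = T \<omega>} \<omega> * f (T \<omega>)"
          by eventually_elim (use False in \<open>auto simp: indicator_def\<close>)
        then show ?thesis by (rule tendsto_eventually)
      qed
    qed
    show "AE \<omega> in M. norm (indicator {\<omega>\<in>space M. D \<omega> = j \<and> rgrid n (T \<omega>) < Tt \<omega>} \<omega> * f (T \<omega>)) \<le> B" for n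
      by (rule AE_I2) (use f_bound B0 in \<open>auto simp: indicator_def abs_mult\<close>)
  qed auto
  have lim_b: "b \<longlonglongrightarrow> (\<integral>\<omega>. indicator {\<omega>\<in>space M. D \<omega> = j} \<omega> * h (T \<omega>) \<partial>M)"
    unfolding b_def
  proof (rule integral_dominated_convergence[where w="\<lambda>_. B"])
    show "AE \<omega> in M. (\<lambda>n. indicator {\<omega>\<in>space M. D \<omega> = j} \<omega> * (c (rgrid n (T \<omega>)) * f (T \<omega>)))
       \<longlonglongrightarrow> indicator {\<omega>\<in>space M. D \<omega> = j} \<omega> * h (T \<omega>)"
    proof (rule AE_I2)
      fix \<omega> assume \<omega>: "\<omega> \<in> space M"
      show "(\<lambda>n. indicator {\<omega>\<in>space M. D \<omega> = j} \<omega> * (c (rgrid n (T \<omega>)) * f (T \<omega>)))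
       \<longlonglongrightarrow> indicator {\<omega>\<in>space M. D \<omega> = j} \<omega> * h (T \<omega>)"
      proof (cases "T \<omega> \<in> {0<..t}")
        case True
        let ?s = "T \<omega>"
        have qts: "0 < qt ?s" using qt_ge[of ?s] True Stt by auto
        have qs: "0 < q ?s" using qts q_ge[of ?s] by linarith
        have 1: "(\<lambda>n. survival M Tt (rgrid n ?s)) \<longlonglongrightarrow> qt ?s"
          unfolding qt_def by (rule filterlim_compose[OF surv_left rgrid_at_left]) simp
        have 2: "(\<lambda>n. survival M T (rgrid n ?s)) \<longlonglongrightarrow> q ?s"
          unfolding q_def by (rule filterlim_compose[OF surv_left rgrid_at_left]) simp
        have "(\<lambda>n. c (rgrid n ?s)) \<longlonglongrightarrow> qt ?s / q ?s"
          unfolding c_def by (rule tendsto_divide[OF 1 2]) (use qs in simp)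
        then have "(\<lambda>n. indicator {\<omega>\<in>space M. D \<omega> = j} \<omega> * (c (rgrid n ?s) * f ?s))
             \<longlonglongrightarrow> indicator {\<omega>\<in>space M. D \<omega> = j} \<omega> * (qt ?s / q ?s * f ?s)"
          by (intro tendsto_mult_left tendsto_mult_right)
        moreover have "qt ?s / q ?s * f ?s = h ?s"
          using True qts qs by (simp add: f_def h_def)
        ultimately show ?thesis by (simp only:)
      next
        case False
        then show ?thesis by (simp add: f_zero h_def)
      qed
    qed
    show "AE \<omega> in M. norm (indicator {\<omega>\<in>space M. D \<omega> = j} \<omega> * (c (rgrid n (T \<omega>)) * f (T \<omega>))) \<le> B" for n
    proof (rule AE_I2)
      fix \<omega>
      have "\<bar>c (rgrid n (T \<omega>)) * f (T \<omega>)\<bar> \<le> 1 * B"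
        unfolding abs_mult using c01[of "rgrid n (T \<omega>)"] f_bound[of "T \<omega>"]
        by (intro mult_mono) auto
      then show "norm (indicator {\<omega>\<in>space M. D \<omega> = j} \<omega> * (c (rgrid n (T \<omega>)) * f (T \<omega>))) \<le> B"
        by (auto simp: indicator_def)
    qed
  qed auto
  have ab: "a n = b n" for n
  proof -
    define V where "V = rgrid n ` {0<..t}"
    have finV: "finite V" unfolding V_def by (rule rgrid_finite)
    have VJ: "v \<in> Jset M Tt" if "v \<in> V" for v
    proof -
      obtain s where s: "0 < s" "s \<le> t" "v = rgrid n s" using \<open>v \<in> V\<close> by (auto simp: V_def)
      have "0 \<le> v" using s by (simp add: rgrid_nonneg)
      moreover have "v \<le> t" using rgrid_lt[of n s] s by simp
      ultimately show ?thesis using St_mono[of v] Stt by (simp add: Jset_def)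
    qed
    define \<phi> where "\<phi> = (\<lambda>v s. indicator {s. rgrid n s = v} s * f s :: real)"
    have [measurable]: "\<phi> v \<in> borel_measurable borel" for v
      unfolding \<phi>_def by measurable
    have notV: "f s = 0" if "rgrid n s \<notin> V" for s
      using that by (intro f_zero) (auto simp: V_def)
    have eq1: "indicator {\<omega>\<in>space M. D \<omega> = j \<and> rgrid n (T \<omega>) < Tt \<omega>} \<omega> * f (T \<omega>)
        = (\<Sum>v\<in>V. indicator {\<omega>\<in>space M. D \<omega> = j \<and> v < Tt \<omega>} \<omega> * \<phi> v (T \<omega>))" for \<omega>
    proof -
      have "(\<Sum>v\<in>V. indicator {\<omega>\<in>space M. D \<omega> = j \<and> v < Tt \<omega>} \<omega> * \<phi> v (T \<omega>))
          = (\<Sum>v\<in>V. if rgrid n (T \<omega>) = v then indicator {x\<in>space M. D x = j \<and> rgrid n (T x) < Tt x} \<omega> * f (T \<omega>) else 0)"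
        by (rule sum.cong) (auto simp: \<phi>_def indicator_def)
      also have "\<dots> = indicator {x\<in>space M. D x = j \<and> rgrid n (T x) < Tt x} \<omega> * f (T \<omega>)"
        using finV notV[of "T \<omega>"] by simp
      finally show ?thesis ..
    qed
    have eq2: "indicator {\<omega>\<in>space M. D \<omega> = j} \<omega> * (c (rgrid n (T \<omega>)) * f (T \<omega>))
        = (\<Sum>v\<in>V. c v * (indicator {\<omega>\<in>space M. D \<omega> = j \<and> v < T \<omega>} \<omega> * \<phi> v (T \<omega>)))" for \<omega>
    proof -
      have "(\<Sum>v\<in>V. c v * (indicator {\<omega>\<in>space M. D \<omega> = j \<and> v < T \<omega>} \<omega> * \<phi> v (T \<omega>)))
          = (\<Sum>v\<in>V. if rgrid n (T \<omega>) = v then indicator {\<omega>\<in>space M. D \<omega> = j} \<omega> * (c (rgrid n (T \<omega>)) * f (T \<omega>)) else 0)"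
        by (rule sum.cong) (auto simp: \<phi>_def rgrid_lt indicator_def)
      also have "\<dots> = indicator {\<omega>\<in>space M. D \<omega> = j} \<omega> * (c (rgrid n (T \<omega>)) * f (T \<omega>))"
        using finV notV[of "T \<omega>"] by simp
      finally show ?thesis ..
    qed
    have phib: "\<bar>\<phi> v s\<bar> \<le> B" for v s
      using f_bound[of s] B0 by (auto simp: \<phi>_def indicator_def abs_mult)
    have int1: "integrable M (\<lambda>\<omega>. indicator {\<omega>\<in>space M. D \<omega> = j \<and> v < X \<omega>} \<omega> * \<phi> v (T \<omega>))"
      if [measurable]: "X \<in> borel_measurable M" for v X
    proof (rule integrable_const_bound[where B=B])
      show "AE x in M. norm (indicator {\<omega>\<in>space M. D \<omega> = j \<and> v < X \<omega>} x * \<phi> v (T x)) \<le> B"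
        using phib B0 by (intro AE_I2) (auto simp: indicator_def)
    qed measurable
    have "a n = (\<Sum>v\<in>V. \<integral>\<omega>. indicator {\<omega>\<in>space M. D \<omega> = j \<and> v < Tt \<omega>} \<omega> * \<phi> v (T \<omega>) \<partial>M)"
      unfolding a_def eq1 by (rule Bochner_Integration.integral_sum) (rule int1; measurable)
    also have "\<dots> = (\<Sum>v\<in>V. c v * (\<integral>\<omega>. indicator {\<omega>\<in>space M. D \<omega> = j \<and> v < T \<omega>} \<omega> * \<phi> v (T \<omega>) \<partial>M))"
      unfolding c_def
      by (intro sum.cong refl rep_integral[OF assms(1-3) _ pos rep j VJ]) auto
    also have "\<dots> = (\<Sum>v\<in>V. \<integral>\<omega>. c v * (indicator {\<omega>\<in>space M. D \<omega> = j \<and> v < T \<omega>} \<omega> * \<phi> v (T \<omega>)) \<partial>M)"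
      by simp
    also have "\<dots> = b n"
      unfolding b_def eq2 by (rule Bochner_Integration.integral_sum[symmetric]) (intro integrable_mult_right int1; measurable)
    finally show ?thesis .
  qed
  have "(\<integral>\<omega>. indicator {\<omega>\<in>space M. D \<omega> = j \<and> Tt \<omega> = T \<omega>} \<omega> * f (T \<omega>) \<partial>M)
      = (\<integral>\<omega>. indicator {\<omega>\<in>space M. D \<omega> = j} \<omega> * h (T \<omega>) \<partial>M)"
  proof -
    have "a = b" using ab by (simp add: fun_eq_iff)
    then show ?thesis using LIMSEQ_unique[OF lim_a] lim_b by simp
  qed
  then show ?thesis by (simp add: f_def h_def qt_def q_def)
qed

end

lemma part1:
  assumes set: "setting d M T D Tt Dt" and rep: "representative d M T D Tt"
  shows "identifiable d M T D Tt Dt"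
proof -
  interpret prob_space M using set by (simp add: setting_def)
  have [measurable]: "T \<in> borel_measurable M" "Tt \<in> borel_measurable M"
    "D \<in> measurable M (count_space UNIV)" "Dt \<in> measurable M (count_space UNIV)"
    using set by (auto simp: setting_def)
  have ax: "\<And>\<omega>. \<omega> \<in> space M \<Longrightarrow> 0 < T \<omega> \<and> D \<omega> \<in> {1..d} \<and> 0 < Tt \<omega> \<and> Tt \<omega> \<le> T \<omega> \<and>
        Dt \<omega> = D \<omega> * (if Tt \<omega> = T \<omega> then 1 else 0)"
    using set by (simp add: setting_def)
  have pos: "\<And>\<omega>. \<omega> \<in> space M \<Longrightarrow> 0 < T \<omega> \<and> Tt \<omega> \<le> T \<omega>" using ax by blast
  show ?thesis unfolding identifiable_def
  proof (intro allI impI, elim conjE)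
    fix t j assume tJ: "t \<in> Jset M Tt" and j: "j \<in> {1..d}"
    have "cumhaz M Tt Dt j t = (\<integral>\<omega>. indicator {\<omega>\<in>space M. Dt \<omega> = j} \<omega> *
       (indicator {0<..t} (Tt \<omega>) * (1 / prob {\<omega>'\<in>space M. Tt \<omega> \<le> Tt \<omega>'})) \<partial>M)"
      by (rule cumhaz_expect) measurable
    also have "\<dots> = (\<integral>\<omega>. indicator {\<omega>\<in>space M. D \<omega> = j \<and> Tt \<omega> = T \<omega>} \<omega> *
            (indicator {0<..t} (T \<omega>) * (1 / prob {\<omega>'\<in>space M. T \<omega> \<le> Tt \<omega>'})) \<partial>M)"
    proof (rule Bochner_Integration.integral_cong[OF refl])
      fix \<omega> assume \<omega>: "\<omega> \<in> space M"
      show "indicator {\<omega>\<in>space M. Dt \<omega> = j} \<omega> *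
         (indicator {0<..t} (Tt \<omega>) * (1 / prob {\<omega>'\<in>space M. Tt \<omega> \<le> Tt \<omega>'}))
         = indicator {\<omega>\<in>space M. D \<omega> = j \<and> Tt \<omega> = T \<omega>} \<omega> *
            (indicator {0<..t} (T \<omega>) * (1 / prob {\<omega>'\<in>space M. T \<omega> \<le> Tt \<omega>'}))"
        using ax[OF \<omega>] j \<omega> by (cases "Tt \<omega> = T \<omega>") (auto simp: indicator_def)
    qed
    also have "\<dots> = (\<integral>\<omega>. indicator {\<omega>\<in>space M. D \<omega> = j} \<omega> *
            (indicator {0<..t} (T \<omega>) * (1 / prob {\<omega>'\<in>space M. T \<omega> \<le> T \<omega>'})) \<partial>M)"
      by (rule key[OF _ _ _ pos rep j tJ]) measurable
    also have "\<dots> = cumhaz M T D j t"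
      by (rule cumhaz_expect[symmetric]) measurable
    finally show "cumhaz M Tt Dt j t = cumhaz M T D j t" .
  qed
qed


lemma part2:
  fixes d :: nat
  assumes d: "d \<ge> 1"
  shows "\<exists>(M :: real measure) T D Tt Dt.
            setting d M T D Tt Dt \<and> identifiable d M T D Tt Dt \<and>
            \<not> representative d M T D Tt"
proof -
  define M where "M = measure_pmf (pmf_of_set {0::real, 1})"
  define T where "T = (\<lambda>\<omega>::real. if \<omega> = 0 then 2 else 3 :: real)"
  define D where "D = (\<lambda>\<omega>::real. 1::nat)"
  define Tt where "Tt = (\<lambda>\<omega>::real. if \<omega> = 0 then 1 else 1/2 :: real)"
  define Dt where "Dt = (\<lambda>\<omega>::real. 0::nat)"
  interpret prob_space M unfolding M_def by (rule prob_space_measure_pmf)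
  have [simp]: "space M = UNIV" "sets M = UNIV" by (simp_all add: M_def)
  have mM: "measure M A = card ({0,1} \<inter> A) / 2" for A
    unfolding M_def by (subst measure_pmf_of_set) auto
  have S: "setting d M T D Tt Dt"
    unfolding setting_def using d prob_space_axioms
    by (auto simp: M_def T_def D_def Tt_def Dt_def)
  have I: "identifiable d M T D Tt Dt"
    unfolding identifiable_def
  proof (intro allI impI, elim conjE)
    fix t j assume tJ: "t \<in> Jset M Tt" and j: "j \<in> {1..d}"
    have t1: "t < 1"
    proof (rule ccontr)
      assume "\<not> t < 1"
      then have "{\<omega>\<in>space M. t < Tt \<omega>} = {}" by (auto simp: Tt_def split: if_splits)
      then show False using tJ by (simp add: Jset_def survival_def)
    qed
    have "cumhaz M Tt Dt j t = (\<integral>\<omega>. indicator {\<omega>\<in>space M. Dt \<omega> = j} \<omega> *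
       (indicator {0<..t} (Tt \<omega>) * (1 / prob {\<omega>'\<in>space M. Tt \<omega> \<le> Tt \<omega>'})) \<partial>M)"
      by (rule cumhaz_expect) (simp_all add: M_def)
    also have "\<dots> = 0" using j by (simp add: Dt_def)
    finally have 1: "cumhaz M Tt Dt j t = 0" .
    have "cumhaz M T D j t = (\<integral>\<omega>. indicator {\<omega>\<in>space M. D \<omega> = j} \<omega> *
       (indicator {0<..t} (T \<omega>) * (1 / prob {\<omega>'\<in>space M. T \<omega> \<le> T \<omega>'})) \<partial>M)"
      by (rule cumhaz_expect) (simp_all add: M_def)
    also have "\<dots> = 0"
    proof -
      have z: "indicator {0<..t} (T \<omega>) = (0::real)" for \<omega> using t1 by (simp add: T_def indicator_def)
      show ?thesis by (simp only: z) simp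
    qed
    finally show "cumhaz M Tt Dt j t = cumhaz M T D j t" using 1 by simp
  qed
  have NR: "\<not> representative d M T D Tt"
  proof
    assume "representative d M T D Tt"
    moreover have "(1/2::real) \<in> Jset M Tt"
    proof -
      have "{\<omega>\<in>space M. 1/2 < Tt \<omega>} = {0}" by (auto simp: Tt_def split: if_splits)
      then show ?thesis by (simp add: Jset_def survival_def mM)
    qed
    moreover have "(1::nat) \<in> {1..d}" using d by simp
    ultimately have eq: "condprob M {\<omega>\<in>space M. T \<omega> \<le> 2 \<and> D \<omega> = 1} {\<omega>\<in>space M. Tt \<omega> > 1/2}
        = condprob M {\<omega>\<in>space M. T \<omega> \<le> 2 \<and> D \<omega> = 1} {\<omega>\<in>space M. T \<omega> > 1/2}"
      unfolding representative_def by (elim allE[of _ 2] allE[of _ "1/2"] allE[of _ 1]) simp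
    have a: "{\<omega>\<in>space M. T \<omega> \<le> 2 \<and> D \<omega> = 1} = {0}" by (auto simp: T_def D_def split: if_splits)
    have b: "{\<omega>\<in>space M. Tt \<omega> > 1/2} = {0}" by (auto simp: Tt_def split: if_splits)
    have c: "{\<omega>\<in>space M. T \<omega> > 1/2} = UNIV" by (auto simp: T_def)
    show False using eq unfolding a b c condprob_def by (simp add: mM)
  qed
  show ?thesis using S I NR by blast
qed

theorem proposition4:
  fixes d :: nat
  assumes "d \<ge> 1"
  shows "(\<forall>(M :: 'a measure) T D Tt Dt.
            setting d M T D Tt Dt \<longrightarrow> representative d M T D Tt \<longrightarrow>
            identifiable d M T D Tt Dt)
       \<and> (\<exists>(M :: real measure) T D Tt Dt.
            setting d M T D Tt Dt \<and> identifiable d M T D Tt Dt \<and>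
            \<not> representative d M T D Tt)"
  using part1 part2[OF assms] by blast

end
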